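(* There exists a constant $C_0$ such that, almost surely, for every $C>0$ and $M>0$ the following holds for $t$ large enough: for all $x\in\mathbb R^2$ with $|x|\le Ct$ and all $v\in S^1$, if $\{e_k\}$ is a path of edges of $\mathcal V$ connecting $\pi_0(x)$ and $\pi_0(x+tv)$ (a test path for $m_0(x,x+tv)$) with $\#\{e_k\}\le tM$, then every point of $\bigcup_k e_k$ lies at distance at most $C_0Mt$ from $x$.
   Context: $\mathcal N$ is a Poisson random set of intensity $1$ in $\mathbb R^2$ on a probability space $(\Omega,\mathcal F,\mathbf P)$ equipped with an ergodic group of measure-preserving translations compatible with $\mathcal N$. Voronoi cells $C_i=\{x:|x-i|\le|x-j|\ \forall j\in\mathcal N\}$; $\mathcal V$ is the set of edges of Voronoi cells and $\mathcal N^*$ the set of their vertices. $\pi_0(x)$ is a closest point of $\mathcal N^*$ to $x$. A path of edges connecting two points $\bar x,\bar y$ is a collection of edges $[x_{k-1},x_k]\in\mathcal V$, $k=1,\dots,K$, with $x_0=\bar x$, $x_K=\bar y$, forming a non-self-intersecting polygonal curve; $m_0(x,y)$ is the minimal number of edges of such a path connecting $\pi_0(x)$ and $\pi_0(y)$. *)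

theory Defs
  imports "HOL-Probability.Probability"
begin

type_synonym pt = "real^2"

definition poisson_process :: "'w measure \<Rightarrow> ('w \<Rightarrow> pt set) \<Rightarrow> bool" where
  "poisson_process P N \<longleftrightarrow>
     prob_space P \<and>
     (\<forall>\<omega>\<in>space P. \<forall>B. bounded B \<longrightarrow> finite (N \<omega> \<inter> B)) \<and>
     (\<forall>A. A \<in> sets lborel \<and> bounded A \<longrightarrow>
        (\<forall>k::nat. measure P {\<omega> \<in> space P. card (N \<omega> \<inter> A) = k}
              = exp (- measure lborel A) * (measure lborel A) ^ k / fact k)) \<and>
     (\<forall>(I::nat set) (A::nat \<Rightarrow> pt set). finite I \<longrightarrow> disjoint_family_on A I \<longrightarrow>
        (\<forall>i\<in>I. A i \<in> sets lborel \<and> bounded (A i)) \<longrightarrow>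
        prob_space.indep_vars P (\<lambda>_. count_space UNIV) (\<lambda>i \<omega>. card (N \<omega> \<inter> A i)) I)"

definition voronoi_cell :: "pt set \<Rightarrow> pt \<Rightarrow> pt set" where
  "voronoi_cell S i = {x. \<forall>j\<in>S. dist x i \<le> dist x j}"

definition voronoi_edges :: "pt set \<Rightarrow> pt set set" where
  "voronoi_edges S = {e. \<exists>i\<in>S. \<exists>j\<in>S. i \<noteq> j \<and>
      (\<exists>a b. a \<noteq> b \<and> e = closed_segment a b \<and> voronoi_cell S i \<inter> voronoi_cell S j = e)}"

definition voronoi_vertices :: "pt set \<Rightarrow> pt set" where
  "voronoi_vertices S = {a. \<exists>b. a \<noteq> b \<and> closed_segment a b \<in> voronoi_edges S}"

definition closest_point :: "pt set \<Rightarrow> pt \<Rightarrow> pt \<Rightarrow> bool" where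
  "closest_point A x p \<longleftrightarrow> p \<in> A \<and> (\<forall>q\<in>A. dist x p \<le> dist x q)"

definition edge_path :: "pt set \<Rightarrow> pt list \<Rightarrow> bool" where
  "edge_path S xs \<longleftrightarrow> xs \<noteq> [] \<and>
     (\<forall>k. Suc k < length xs \<longrightarrow> closed_segment (xs!k) (xs!Suc k) \<in> voronoi_edges S) \<and>
     (\<forall>k l. k < l \<and> Suc l < length xs \<longrightarrow>
        closed_segment (xs!k) (xs!Suc k) \<inter> closed_segment (xs!l) (xs!Suc l)
          = (if l = Suc k then {xs!l} else {}))"

definition path_edges_union :: "pt list \<Rightarrow> pt set" where
  "path_edges_union xs = (\<Union>k\<in>{k. Suc k < length xs}. closed_segment (xs!k) (xs!Suc k))"

end

theory Submission
  imports Defs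
begin


lemma dist_le_iff_half:
  fixes x i j :: pt
  shows "dist x i \<le> dist x j \<longleftrightarrow> (2 *\<^sub>R (j - i)) \<bullet> x \<le> j \<bullet> j - i \<bullet> i"
proof -
  have "dist x i \<le> dist x j \<longleftrightarrow> (dist x i)^2 \<le> (dist x j)^2"
    by (simp add: abs_le_square_iff[symmetric])
  also have "\<dots> \<longleftrightarrow> (x - i) \<bullet> (x - i) \<le> (x - j) \<bullet> (x - j)"
    by (simp add: dist_norm power2_norm_eq_inner)
  also have "\<dots> \<longleftrightarrow> (2 *\<^sub>R (j - i)) \<bullet> x \<le> j \<bullet> j - i \<bullet> i"
    by (simp add: inner_diff_left inner_diff_right inner_commute algebra_simps)
  finally show ?thesis .
qed

lemma dist_eq_iff_hyp:
  fixes x i j :: pt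
  shows "dist x i = dist x j \<longleftrightarrow> (2 *\<^sub>R (j - i)) \<bullet> x = j \<bullet> j - i \<bullet> i"
  using dist_le_iff_half[of x i j] dist_le_iff_half[of x j i]
  by (smt (verit, ccfv_threshold) inner_diff_left inner_minus_left minus_diff_eq scaleR_right_diff_distrib)

lemma cell_eq_Inter: "voronoi_cell S i = (\<Inter>j\<in>S. {x. (2 *\<^sub>R (j - i)) \<bullet> x \<le> j \<bullet> j - i \<bullet> i})"
  unfolding voronoi_cell_def by (auto simp: dist_le_iff_half)

lemma convex_cell: "convex (voronoi_cell S i)"
  unfolding cell_eq_Inter by (intro convex_INT convex_halfspace_le)

lemma closed_cell: "closed (voronoi_cell S i)"
  unfolding cell_eq_Inter by (intro closed_INT ballI closed_halfspace_le)

lemma collinear_bisector: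
  fixes i j :: pt assumes "i \<noteq> j"
  shows "collinear {x. dist x i = dist x j}"
proof -
  have ne: "2 *\<^sub>R (j - i) \<noteq> 0" using assms by auto
  have "{x. dist x i = dist x j} = {x. (2 *\<^sub>R (j - i)) \<bullet> x = j \<bullet> j - i \<bullet> i}"
    by (auto simp: dist_eq_iff_hyp)
  moreover have "aff_dim \<dots> = 1" using aff_dim_hyperplane[OF ne] by simp
  ultimately show ?thesis by (simp add: collinear_aff_dim)
qed



definition locfin :: "pt set \<Rightarrow> bool" where
  "locfin S \<longleftrightarrow> (\<forall>B. bounded B \<longrightarrow> finite (S \<inter> B))"

lemma finite_pos_lb:
  fixes f :: "'a \<Rightarrow> real"
  assumes "finite F" "\<And>j. j \<in> F \<Longrightarrow> 0 < f j"
  shows "\<exists>d>0. d \<le> 1 \<and> (\<forall>j\<in>F. d \<le> f j)"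
  using assms
proof (induction F rule: finite_induct)
  case empty then show ?case by (intro exI[of _ 1]) auto
next
  case (insert a F)
  then obtain d where d: "d > 0" "d \<le> 1" "\<forall>j\<in>F. d \<le> f j" by auto
  have "f a > 0" using insert by auto
  then show ?case using d by (intro exI[of _ "min d (f a)"]) auto
qed

lemma frontier_cell_other:
  assumes lf: "locfin S" and iS: "i \<in> S" and b: "b \<in> frontier (voronoi_cell S i)"
  shows "\<exists>j\<in>S. j \<noteq> i \<and> dist b j = dist b i"
proof (rule ccontr)
  assume H: "\<not> ?thesis"
  have bc: "b \<in> voronoi_cell S i"
    using b closed_cell[of S i] by (metis DiffD1 closure_closed frontier_def)
  then have le: "\<And>j. j \<in> S \<Longrightarrow> dist b i \<le> dist b j" by (auto simp: voronoi_cell_def)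
  define F where "F = S \<inter> cball b (dist b i + 1) - {i}"
  have fF: "finite F" unfolding F_def using lf by (auto simp: locfin_def intro: finite_subset)
  have pos: "\<And>j. j \<in> F \<Longrightarrow> 0 < dist b j - dist b i"
    using H le unfolding F_def by (metis DiffD1 DiffD2 IntD1 diff_gt_0_iff_gt insertI1 order_le_less)
  obtain d where d: "d > 0" "d \<le> 1" "\<forall>j\<in>F. d \<le> dist b j - dist b i"
    using finite_pos_lb[of F "\<lambda>j. dist b j - dist b i"] fF pos by blast
  have "ball b (d/2) \<subseteq> voronoi_cell S i"
  proof
    fix z assume z: "z \<in> ball b (d/2)"
    have zi: "dist z i \<le> dist b i + d/2" using z dist_triangle[of z i b]
      by (simp add: dist_commute)
    show "z \<in> voronoi_cell S i" unfolding voronoi_cell_def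
    proof (intro CollectI ballI)
      fix j assume jS: "j \<in> S"
      have bj: "dist b j \<le> dist b z + dist z j" using dist_triangle[of b j z] .
      show "dist z i \<le> dist z j"
      proof (cases "j = i")
        case True then show ?thesis by simp
      next
        case False
        show ?thesis
        proof (cases "j \<in> F")
          case True
          then show ?thesis using d(3) bj zi z by (auto simp: dist_commute)
        next
          case False2: False
          then have "dist b j > dist b i + 1" using jS False unfolding F_def by auto
          then show ?thesis using bj zi z d(2) by (auto simp: dist_commute)
        qed
      qed
    qed
  qed
  then have "b \<in> interior (voronoi_cell S i)"
    using d(1) mem_interior half_gt_zero by blast
  then show False using b by (simp add: frontier_def)
qed



definition vec2 :: "real \<Rightarrow> real \<Rightarrow> pt" where
  "vec2 a b = (\<chi> k. if k = 1 then a else b)"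

lemma vec2_nth[simp]: "vec2 a b $ 1 = a" "vec2 a b $ 2 = b"
  by (auto simp: vec2_def)

lemma vertex_in_cell:
  assumes lf: "locfin S" and iS: "i \<in> S" and cb: "voronoi_cell S i \<subseteq> cball i \<rho>"
  shows "\<exists>v\<in>voronoi_vertices S. v \<in> voronoi_cell S i"
proof -
  let ?C = "voronoi_cell S i"
  have icell: "i \<in> ?C" by (auto simp: voronoi_cell_def)
  then have rho0: "\<rho> \<ge> 0" using cb by auto
  define y where "y m = i + (\<rho> + 1) *\<^sub>R vec2 1 (real m)" for m :: nat
  have "\<exists>b. b \<in> closed_segment i (y m) \<inter> frontier ?C" for m
  proof -
    have "norm (vec2 1 (real m)) \<ge> 1" using component_le_norm_cart[of "vec2 1 (real m)" 1] by simp
    then have "norm ((\<rho> + 1) *\<^sub>R vec2 1 (real m)) \<ge> \<rho> + 1" using rho0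
      by (simp add: mult_left_le) 
    then have "dist i (y m) > \<rho>" unfolding y_def by (simp add: dist_norm)
    then have "y m \<notin> ?C" using cb by auto
    then have "closed_segment i (y m) \<inter> frontier ?C \<noteq> {}"
      using icell by (intro connected_Int_frontier) auto
    then show ?thesis by blast
  qed
  then have "\<forall>m. \<exists>b. b \<in> closed_segment i (y m) \<inter> frontier ?C" by blast
  from choice[OF this] obtain b where b0: "\<forall>m. b m \<in> closed_segment i (y m) \<inter> frontier ?C"
    by blast
  then have b: "\<And>m. b m \<in> closed_segment i (y m) \<inter> frontier ?C" by blast
  have bC: "b m \<in> ?C" for m
    using b[of m] closed_cell[of S i] by (metis DiffD1 IntD2 closure_closed frontier_def)
  have "\<exists>j\<in>S. j \<noteq> i \<and> dist (b m) j = dist (b m) i" for m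
    using frontier_cell_other[OF lf iS] b by blast
  then have "\<forall>m. \<exists>j. j \<in> S \<and> j \<noteq> i \<and> dist (b m) j = dist (b m) i" by blast
  from choice[OF this] obtain jf where jf0: "\<forall>m. jf m \<in> S \<and> jf m \<noteq> i \<and> dist (b m) (jf m) = dist (b m) i"
    by blast
  then have jf: "\<And>m. jf m \<in> S" "\<And>m. jf m \<noteq> i" "\<And>m. dist (b m) (jf m) = dist (b m) i"
    by auto
  have bni: "b m \<noteq> i" for m using jf[of m] by auto
  have bCj: "b m \<in> voronoi_cell S (jf m)" for m
    using bC[of m] jf(3)[of m] by (auto simp: voronoi_cell_def)
  define J where "J = S \<inter> cball i (2 * \<rho> + 1) - {i}"
  have fJ: "finite J" unfolding J_def using lf by (auto simp: locfin_def intro: finite_subset)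
  have jJ: "jf m \<in> J" for m
  proof -
    have "dist (b m) i \<le> \<rho>" using bC[of m] cb by (auto simp: dist_commute)
    then have "dist i (jf m) \<le> 2 * \<rho>" using dist_triangle[of i "jf m" "b m"] jf(3)[of m]
      by (simp add: dist_commute)
    then show ?thesis using jf unfolding J_def by auto
  qed
  have injb: "inj b"
  proof (rule injI)
    fix m m' assume eq: "b m = b m'"
    obtain u where u: "b m = (1 - u) *\<^sub>R i + u *\<^sub>R y m" using b[of m] by (auto simp: in_segment)
    obtain u' where u': "b m' = (1 - u') *\<^sub>R i + u' *\<^sub>R y m'" using b[of m'] by (auto simp: in_segment)
    have d1: "b m - i = (u * (\<rho> + 1)) *\<^sub>R vec2 1 (real m)" using u unfolding y_def
      by (simp add: algebra_simps)
    have d2: "b m' - i = (u' * (\<rho> + 1)) *\<^sub>R vec2 1 (real m')" using u' unfolding y_def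
      by (simp add: algebra_simps)
    have "(b m - i) $ 1 = (b m' - i) $ 1" using eq by simp
    then have uu: "u * (\<rho> + 1) = u' * (\<rho> + 1)" using d1 d2 by simp
    have "u * (\<rho> + 1) \<noteq> 0" using d1 bni[of m] by auto
    moreover have "(b m - i) $ 2 = (b m' - i) $ 2" using eq by simp
    then have "u * (\<rho> + 1) * real m = u' * (\<rho> + 1) * real m'" using d1 d2 by simp
    ultimately show "m = m'" using uu by simp
  qed
  have rsub: "range b \<subseteq> (\<Union>j\<in>J. ?C \<inter> voronoi_cell S j)"
  proof
    fix z assume "z \<in> range b"
    then obtain m where "z = b m" by blast
    then show "z \<in> (\<Union>j\<in>J. ?C \<inter> voronoi_cell S j)"
      using bC[of m] bCj[of m] jJ[of m] by blast
  qed
  have infr: "infinite (range b)" using injb by (rule range_inj_infinite)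
  have "\<not> (\<forall>j\<in>J. finite (?C \<inter> voronoi_cell S j))"
  proof
    assume "\<forall>j\<in>J. finite (?C \<inter> voronoi_cell S j)"
    then have "finite (\<Union>j\<in>J. ?C \<inter> voronoi_cell S j)" using fJ by blast
    then show False using infr rsub finite_subset by blast
  qed
  then obtain j where jJ': "j \<in> J" and inf: "infinite (?C \<inter> voronoi_cell S j)"
    by blast
  let ?T = "?C \<inter> voronoi_cell S j"
  have jS: "j \<in> S" "j \<noteq> i" using jJ' unfolding J_def by auto
  have "?T \<noteq> {}" using inf by auto
  moreover have "compact ?T"
    using cb closed_cell[of S i] closed_cell[of S j]
    unfolding compact_eq_bounded_closed
    by (intro conjI closed_Int bounded_Int) (auto intro: bounded_subset[of "cball i \<rho>"])
  moreover have "convex ?T" using convex_cell by (intro convex_Int)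
  moreover have "collinear ?T"
  proof (rule collinear_subset[of "{x. dist x i = dist x j}"])
    show "collinear {x. dist x i = dist x j}" using jS(2) by (intro collinear_bisector) auto
    show "?T \<subseteq> {x. dist x i = dist x j}"
    proof
      fix x assume "x \<in> ?T"
      then have "dist x i \<le> dist x j" "dist x j \<le> dist x i"
        using iS jS(1) unfolding voronoi_cell_def by auto
      then show "x \<in> {x. dist x i = dist x j}" by simp
    qed
  qed
  ultimately obtain a c where ac: "?T = closed_segment a c"
    using compact_convex_collinear_segment by blast
  have "a \<noteq> c" using ac inf by auto
  then have "closed_segment a c \<in> voronoi_edges S"
    unfolding voronoi_edges_def using iS jS ac by blast
  then have "a \<in> voronoi_vertices S" using \<open>a \<noteq> c\<close> unfolding voronoi_vertices_def by blast
  moreover have "a \<in> ?C" using ac by auto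
  ultimately show ?thesis by blast
qed



lemma cell_bounded:
  assumes dens: "\<And>z. dist z i \<le> \<rho> + 1 \<Longrightarrow> \<exists>j\<in>S. dist z j \<le> \<rho>"
    and rho0: "\<rho> \<ge> 0"
  shows "voronoi_cell S i \<subseteq> cball i \<rho>"
proof
  fix z assume zc: "z \<in> voronoi_cell S i"
  show "z \<in> cball i \<rho>"
  proof (rule ccontr)
    assume "z \<notin> cball i \<rho>"
    then have dz: "dist i z > \<rho>" by simp
    define m where "m = min 1 (dist i z - \<rho>)"
    have m: "m > 0" "m \<le> 1" "m \<le> dist i z - \<rho>" using dz unfolding m_def by auto
    define e where "e = m / 2"
    have e: "e > 0" "e \<le> 1/2" "\<rho> + e < dist i z" using m unfolding e_def by linarith+
    define u where "u = (\<rho> + e) / dist i z"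
    have u: "0 \<le> u" "u \<le> 1" using e rho0 unfolding u_def by (auto simp: divide_le_eq_1)
    define z' where "z' = (1 - u) *\<^sub>R i + u *\<^sub>R z"
    have "z' \<in> closed_segment i z" unfolding z'_def in_segment using u by auto
    moreover have "i \<in> voronoi_cell S i" by (simp add: voronoi_cell_def)
    ultimately have z'c: "z' \<in> voronoi_cell S i"
      using zc convex_cell[of S i] by (meson convex_contains_segment subsetD)
    have "z' - i = u *\<^sub>R (z - i)" unfolding z'_def by (simp add: algebra_simps)
    then have "dist z' i = u * dist i z" using u by (simp add: dist_norm norm_minus_commute)
    then have dzi: "dist z' i = \<rho> + e" unfolding u_def using dz rho0 by (auto split: if_splits)
    then obtain j where "j \<in> S" "dist z' j \<le> \<rho>" using dens[of z'] e by auto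
    then have "dist z' i \<le> \<rho>" using z'c by (force simp: voronoi_cell_def)
    then show False using dzi e by simp
  qed
qed

definition sqi :: "pt \<Rightarrow> int \<times> int" where
  "sqi x = (\<lfloor>x$1 / 8\<rfloor>, \<lfloor>x$2 / 8\<rfloor>)"

definition ib :: "int \<times> int \<Rightarrow> pt set" where
  "ib Z = cbox (vec2 (8 * real_of_int (fst Z) + 2) (8 * real_of_int (snd Z) + 2))
               (vec2 (8 * real_of_int (fst Z) + 6) (8 * real_of_int (snd Z) + 6))"

definition occ :: "pt set \<Rightarrow> int \<times> int \<Rightarrow> bool" where
  "occ S Z \<longleftrightarrow> S \<inter> ib Z \<noteq> {}"

definition adj :: "int \<times> int \<Rightarrow> int \<times> int \<Rightarrow> bool" where
  "adj Z Z' \<longleftrightarrow> \<bar>fst Z - fst Z'\<bar> \<le> 1 \<and> \<bar>snd Z - snd Z'\<bar> \<le> 1"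

definition walk :: "(int \<times> int) list \<Rightarrow> bool" where
  "walk w \<longleftrightarrow> (\<forall>k. Suc k < length w \<longrightarrow> adj (w!k) (w!Suc k))"

definition inbox :: "nat \<Rightarrow> int \<times> int \<Rightarrow> bool" where
  "inbox n Z \<longleftrightarrow> \<bar>fst Z\<bar> \<le> int (n*n) \<and> \<bar>snd Z\<bar> \<le> int (n*n)"

definition Wn :: "nat \<Rightarrow> (int \<times> int) list set" where
  "Wn n = {w. walk w \<and> length w = Suc n \<and> distinct w \<and> inbox n (hd w)}"

definition good :: "pt set \<Rightarrow> nat \<Rightarrow> bool" where
  "good S n0 \<longleftrightarrow> (\<forall>n\<ge>n0. \<forall>w\<in>Wn n. Suc n < 2 * card {Z\<in>set w. occ S Z})"

lemma floor8: "8 * real_of_int \<lfloor>r / 8\<rfloor> \<le> r" "r < 8 * real_of_int \<lfloor>r / 8\<rfloor> + 8"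
  using of_int_floor_le[of "r/8"] real_of_int_floor_add_one_gt[of "r/8"] by linarith+

lemma dist_l1: "dist (z::pt) j \<le> \<bar>z$1 - j$1\<bar> + \<bar>z$2 - j$2\<bar>"
  using norm_le_l1_cart[of "z - j"] by (simp add: dist_norm sum_2)

lemma comp_le_dist: "\<bar>z$k - j$k\<bar> \<le> dist (z::pt) j"
  using component_le_norm_cart[of "z - j" k] by (simp add: dist_norm)

lemma mem_ib: "x \<in> ib Z \<longleftrightarrow> 8 * real_of_int (fst Z) + 2 \<le> x$1 \<and> x$1 \<le> 8 * real_of_int (fst Z) + 6 \<and>
   8 * real_of_int (snd Z) + 2 \<le> x$2 \<and> x$2 \<le> 8 * real_of_int (snd Z) + 6"
  unfolding ib_def mem_box_cart forall_2 by simp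

lemma density:
  assumes g: "good S n0" and n: "n \<ge> n0" and zb: "inbox n (sqi z)"
  shows "\<exists>j\<in>S. dist z j \<le> 8 * real n + 12"
proof -
  obtain a b where ab: "sqi z = (a, b)" by (cases "sqi z") auto
  define w where "w = map (\<lambda>k. (a + int k, b)) [0..<Suc n]"
  have wn: "\<And>k. k < Suc n \<Longrightarrow> w!k = (a + int k, b)" unfolding w_def
    by (simp del: upt_Suc)
  have lw: "length w = Suc n" unfolding w_def by (simp del: upt_Suc)
  have "walk w" unfolding walk_def adj_def using wn lw by auto
  moreover have "distinct w" unfolding w_def by (auto simp: distinct_map inj_on_def simp del: upt_Suc)
  moreover have "hd w = (a, b)" proof -
    have "w \<noteq> []" using lw by auto
    then show ?thesis using wn[of 0] by (simp add: hd_conv_nth)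
  qed
  ultimately have "w \<in> Wn n" unfolding Wn_def using zb ab lw by auto
  then have "Suc n < 2 * card {Z\<in>set w. occ S Z}" using g n unfolding good_def by blast
  then have "{Z\<in>set w. occ S Z} \<noteq> {}" by (metis card.empty less_nat_zero_code mult_0_right)
  then obtain k where k: "k \<le> n" "occ S (a + int k, b)" unfolding w_def
    by (auto simp del: upt_Suc simp: less_Suc_eq_le)
  then obtain j where j: "j \<in> S" "j \<in> ib (a + int k, b)" unfolding occ_def by auto
  have za: "8 * a \<le> z$1" "z$1 < 8 * a + 8" "8 * b \<le> z$2" "z$2 < 8 * b + 8"
    using floor8[of "z$1"] floor8[of "z$2"] ab unfolding sqi_def by auto
  have "\<bar>z$1 - j$1\<bar> \<le> 8 * real n + 6" "\<bar>z$2 - j$2\<bar> \<le> 6"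
    using j(2) za k(1) unfolding mem_ib by (auto simp: abs_le_iff)
  then show ?thesis using dist_l1[of z j] j(1) by force
qed



lemma floor_abs_bound:
  fixes r :: real and N :: nat
  assumes "\<bar>r\<bar> \<le> 8 * real N"
  shows "\<bar>\<lfloor>r / 8\<rfloor>\<bar> \<le> int N"
proof -
  have a: "8 * real_of_int \<lfloor>r / 8\<rfloor> \<le> r" "r < 8 * real_of_int \<lfloor>r / 8\<rfloor> + 8" by (rule floor8)+
  have "real_of_int \<lfloor>r / 8\<rfloor> \<le> real N" using a assms by linarith
  moreover have "real_of_int \<lfloor>r / 8\<rfloor> > - real N - 1" using a assms by linarith
  ultimately have "\<lfloor>r / 8\<rfloor> \<le> int N" "\<lfloor>r / 8\<rfloor> > - int N - 1" by linarith+
  then show ?thesis by linarith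
qed

lemma inbox_of_norm:
  assumes "norm z \<le> 8 * real (n*n)"
  shows "inbox n (sqi z)"
proof -
  have "\<bar>z$1\<bar> \<le> 8 * real (n*n)" "\<bar>z$2\<bar> \<le> 8 * real (n*n)"
    using component_le_norm_cart[of z] assms by (meson order_trans)+
  then have "\<bar>\<lfloor>z$1 / 8\<rfloor>\<bar> \<le> int (n*n)" "\<bar>\<lfloor>z$2 / 8\<rfloor>\<bar> \<le> int (n*n)"
    using floor_abs_bound[of "z$1" "n*n"] floor_abs_bound[of "z$2" "n*n"] by auto
  then show ?thesis unfolding inbox_def sqi_def by simp
qed

lemma vertex_near:
  assumes g: "good S n0" and lf: "locfin S" and n: "n \<ge> n0"
    and big: "norm x + 3 * (8 * real n + 12) + 2 \<le> 8 * real (n*n)"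
  shows "\<exists>v\<in>voronoi_vertices S. dist x v \<le> 2 * (8 * real n + 12)"
proof -
  let ?r = "8 * real n + 12"
  have "inbox n (sqi x)" using big by (intro inbox_of_norm) auto
  then obtain i where i: "i \<in> S" "dist x i \<le> ?r" using density[OF g n] by blast
  have "voronoi_cell S i \<subseteq> cball i ?r"
  proof (rule cell_bounded)
    fix z assume z: "dist z i \<le> ?r + 1"
    have "norm z \<le> norm x + dist z x" using norm_triangle_ineq2[of z x]
      by (simp add: dist_norm)
    also have "dist z x \<le> dist z i + dist i x" by (rule dist_triangle)
    finally have "norm z \<le> 8 * real (n*n)" using z i big by (simp add: dist_commute)
    then show "\<exists>j\<in>S. dist z j \<le> ?r" using density[OF g n] inbox_of_norm by blast
  qed simp
  then obtain v where v: "v \<in> voronoi_vertices S" "v \<in> cball i ?r"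
    using vertex_in_cell[OF lf i(1)] by blast
  then have "dist x v \<le> dist x i + dist i v" using dist_triangle by blast
  then have "dist x v \<le> 2 * ?r" using v i by (simp add: dist_commute)
  then show ?thesis using v(1) by blast
qed

lemma walk_succ: "walk w \<longleftrightarrow> successively adj w"
  unfolding walk_def successively_conv_nth ..

lemma sample_segment:
  fixes u v :: pt
  shows "\<exists>qs. qs \<noteq> [] \<and> hd qs = u \<and> last qs = v \<and> set qs \<subseteq> closed_segment u v \<and>
     successively (\<lambda>a b. dist a b \<le> 8) qs"
proof -
  define T where "T = nat \<lceil>dist u v / 8\<rceil> + 1"
  have T1: "T \<ge> 1" unfolding T_def by simp
  have T8: "dist u v \<le> 8 * real T"
  proof -
    have h: "\<And>y::real. dist u v / 8 \<le> y \<Longrightarrow> dist u v \<le> 8 * (y + 1)" by simp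
    show ?thesis using h[OF real_nat_ceiling_ge[of "dist u v / 8"]] unfolding T_def
      by (simp only: of_nat_add of_nat_1)
  qed
  define f where "f m = u + (real m / real T) *\<^sub>R (v - u)" for m :: nat
  define qs where "qs = map f [0..<Suc T]"
  have "qs \<noteq> []" unfolding qs_def by simp
  moreover have "hd qs = u" unfolding qs_def f_def by (simp add: hd_map del: upt_Suc)
  moreover have "last qs = v" unfolding qs_def f_def using T1 by (simp add: last_map del: upt_Suc)
  moreover have "set qs \<subseteq> closed_segment u v"
  proof
    fix q assume "q \<in> set qs"
    then obtain m where m: "m \<le> T" "q = f m" unfolding qs_def by (auto simp del: upt_Suc simp: less_Suc_eq_le)
    have "0 \<le> real m / real T" "real m / real T \<le> 1" using m T1 by auto
    moreover have "q = (1 - real m / real T) *\<^sub>R u + (real m / real T) *\<^sub>R v"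
      using m unfolding f_def by (simp add: algebra_simps)
    ultimately show "q \<in> closed_segment u v" unfolding in_segment by blast
  qed
  moreover have "successively (\<lambda>a b. dist a b \<le> 8) qs"
    unfolding successively_conv_nth
  proof (intro allI impI)
    fix k assume k: "Suc k < length qs"
    then have kT: "Suc k \<le> T" unfolding qs_def by simp
    have "qs ! k = f k" "qs ! Suc k = f (Suc k)" using kT unfolding qs_def by (simp_all del: upt_Suc)
    moreover have "f (Suc k) - f k = (1 / real T) *\<^sub>R (v - u)" unfolding f_def
      by (simp add: algebra_simps add_divide_distrib)
    then have "dist (f k) (f (Suc k)) = dist u v / real T"
      using T1 by (simp add: dist_norm norm_minus_commute[of "f k"] norm_minus_commute[of u] divide_inverse)
    moreover have "dist u v / real T \<le> 8" using T8 T1 by (simp add: divide_le_eq mult.commute)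
    ultimately show "dist (qs ! k) (qs ! Suc k) \<le> 8" by simp
  qed
  ultimately show ?thesis by blast
qed



fun polyU :: "pt list \<Rightarrow> pt set" where
  "polyU (u # v # r) = closed_segment u v \<union> polyU (v # r)"
| "polyU _ = {}"

lemma polyU_eq: "path_edges_union xs = polyU xs"
proof (induction xs rule: polyU.induct)
  case (1 u v r)
  have "path_edges_union (u # v # r) =
     closed_segment u v \<union> path_edges_union (v # r)"
    unfolding path_edges_union_def
  proof (intro equalityI subsetI)
    fix z assume "z \<in> (\<Union>k\<in>{k. Suc k < length (u # v # r)}. closed_segment ((u # v # r) ! k) ((u # v # r) ! Suc k))"
    then obtain k where k: "Suc k < length (u # v # r)" "z \<in> closed_segment ((u # v # r) ! k) ((u # v # r) ! Suc k)" by blast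
    show "z \<in> closed_segment u v \<union> (\<Union>k\<in>{k. Suc k < length (v # r)}. closed_segment ((v # r) ! k) ((v # r) ! Suc k))"
    proof (cases k)
      case 0 then show ?thesis using k by simp
    next
      case (Suc k') then show ?thesis using k by auto
    qed
  next
    fix z assume "z \<in> closed_segment u v \<union> (\<Union>k\<in>{k. Suc k < length (v # r)}. closed_segment ((v # r) ! k) ((v # r) ! Suc k))"
    then show "z \<in> (\<Union>k\<in>{k. Suc k < length (u # v # r)}. closed_segment ((u # v # r) ! k) ((u # v # r) ! Suc k))"
    proof
      assume "z \<in> closed_segment u v"
      then show ?thesis by (intro UN_I[of 0]) auto
    next
      assume "z \<in> (\<Union>k\<in>{k. Suc k < length (v # r)}. closed_segment ((v # r) ! k) ((v # r) ! Suc k))"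
      then obtain k where "Suc k < length (v # r)" "z \<in> closed_segment ((v # r) ! k) ((v # r) ! Suc k)" by blast
      then show ?thesis by (intro UN_I[of "Suc k"]) auto
    qed
  qed
  then show ?case using 1 by simp
next
  case "2_1" then show ?case by (simp add: path_edges_union_def)
next
  case "2_2" then show ?case by (simp add: path_edges_union_def)
qed

abbreviation step8 :: "pt \<Rightarrow> pt \<Rightarrow> bool" where
  "step8 a b \<equiv> dist a b \<le> 8"

lemma successively_join:
  assumes "qs1 \<noteq> []" "successively P qs1" "successively P qs2" "qs2 \<noteq> []" "last qs1 = hd qs2"
  shows "successively P (butlast qs1 @ qs2)"
proof -
  have "successively P (butlast qs1 @ [last qs1])" using assms(1,2) by simp
  then have "successively P (butlast qs1)" "butlast qs1 = [] \<or> P (last (butlast qs1)) (last qs1)"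
    unfolding successively_append_iff by auto
  then show ?thesis using assms(3,4,5) unfolding successively_append_iff by auto
qed

lemma sample_poly:
  assumes "ps \<noteq> []" "y \<in> polyU ps \<union> {hd ps}"
  shows "\<exists>qs. qs \<noteq> [] \<and> hd qs = hd ps \<and> last qs = y \<and> set qs \<subseteq> polyU ps \<union> {hd ps} \<and>
     successively step8 qs"
  using assms
proof (induction ps rule: polyU.induct)
  case (1 u v r)
  show ?case
  proof (cases "y \<in> closed_segment u v")
    case True
    obtain qs where qs: "qs \<noteq> []" "hd qs = u" "last qs = y" "set qs \<subseteq> closed_segment u y"
      "successively step8 qs" using sample_segment[of u y] by blast
    have "closed_segment u y \<subseteq> closed_segment u v" using True
      by (simp add: subset_closed_segment)
    then show ?thesis using qs by (intro exI[of _ qs]) auto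
  next
    case False
    then have "y \<in> polyU (v # r) \<union> {hd (v # r)}" using "1.prems" by auto
    then obtain qs2 where qs2: "qs2 \<noteq> []" "hd qs2 = v" "last qs2 = y"
      "set qs2 \<subseteq> polyU (v # r) \<union> {v}" "successively step8 qs2"
    proof -
      have "\<exists>qs. qs \<noteq> [] \<and> hd qs = v \<and> last qs = y \<and> set qs \<subseteq> polyU (v # r) \<union> {v} \<and>
         successively step8 qs" using "1.IH" \<open>y \<in> polyU (v # r) \<union> {hd (v # r)}\<close> by simp
      then show ?thesis using that by blast
    qed
    obtain qs1 where qs1: "qs1 \<noteq> []" "hd qs1 = u" "last qs1 = v" "set qs1 \<subseteq> closed_segment u v"
      "successively step8 qs1" using sample_segment[of u v] by blast
    define qs where "qs = butlast qs1 @ qs2"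
    have "successively step8 qs" unfolding qs_def
      using successively_join[OF qs1(1) qs1(5) qs2(5) qs2(1)] qs1(3) qs2(2) by simp
    moreover have "hd qs = u"
    proof (cases "butlast qs1 = []")
      case True
      then have "u = v" using qs1(1,2,3) by (cases qs1) (auto split: if_splits)
      then show ?thesis using True qs2 unfolding qs_def by simp
    next
      case False
      then have "hd (butlast qs1) = u" using qs1(1,2) by (cases qs1) (auto split: if_splits)
      then show ?thesis unfolding qs_def using False by simp
    qed
    moreover have "last qs = y" unfolding qs_def using qs2 by simp
    moreover have "set qs \<subseteq> polyU (u # v # r) \<union> {hd (u # v # r)}"
    proof -
      have "set qs \<subseteq> set qs1 \<union> set qs2" unfolding qs_def using in_set_butlastD by fastforce
      moreover have "v \<in> closed_segment u v" by simp
      moreover have "polyU (u # v # r) = closed_segment u v \<union> polyU (v # r)" by simp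
      ultimately show ?thesis using qs1(4) qs2(4) by blast
    qed
    moreover have "qs \<noteq> []" unfolding qs_def using qs2 by simp
    ultimately show ?thesis by (intro exI[of _ qs]) simp
  qed
next
  case ("2_1") then show ?case by simp
next
  case ("2_2" u)
  then have "y = u" by simp
  then show ?case by (intro exI[of _ "[u]"]) auto
qed

lemma floor_diff_bound:
  fixes a b :: real and c :: nat
  assumes "\<bar>a - b\<bar> \<le> 8 * real c"
  shows "\<bar>\<lfloor>a / 8\<rfloor> - \<lfloor>b / 8\<rfloor>\<bar> \<le> int c"
proof -
  have "8 * real_of_int \<lfloor>a / 8\<rfloor> \<le> a" "a < 8 * real_of_int \<lfloor>a / 8\<rfloor> + 8"
    "8 * real_of_int \<lfloor>b / 8\<rfloor> \<le> b" "b < 8 * real_of_int \<lfloor>b / 8\<rfloor> + 8" by (rule floor8)+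
  then have "real_of_int (\<lfloor>a / 8\<rfloor> - \<lfloor>b / 8\<rfloor>) < real c + 1"
    "real_of_int (\<lfloor>a / 8\<rfloor> - \<lfloor>b / 8\<rfloor>) > - real c - 1" using assms unfolding abs_le_iff by linarith+
  then have "\<lfloor>a / 8\<rfloor> - \<lfloor>b / 8\<rfloor> < int c + 1" "\<lfloor>a / 8\<rfloor> - \<lfloor>b / 8\<rfloor> > - int c - 1"
    by linarith+
  then show ?thesis by linarith
qed

lemma adj_of_step8: "step8 a b \<Longrightarrow> adj (sqi a) (sqi b)"
  unfolding adj_def sqi_def
  using floor_diff_bound[of "a$1" "b$1" 1] floor_diff_bound[of "a$2" "b$2" 1]
    comp_le_dist[of a 1 b] comp_le_dist[of a 2 b] by auto



lemma successively_suffix: "successively P (a @ b) \<Longrightarrow> successively P b"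
  by (simp add: successively_append_iff)

lemma loop_remove:
  assumes "successively adj w" "w \<noteq> []"
  shows "\<exists>w'. successively adj w' \<and> distinct w' \<and> w' \<noteq> [] \<and> hd w' = hd w \<and> last w' = last w \<and> set w' \<subseteq> set w"
  using assms
proof (induction "length w" arbitrary: w rule: less_induct)
  case less
  show ?case
  proof (cases "distinct w")
    case True then show ?thesis using less.prems by blast
  next
    case False
    then obtain xs ys zs y where w: "w = xs @ [y] @ ys @ [y] @ zs" using not_distinct_decomp by blast
    define v where "v = xs @ [y] @ zs"
    have lv: "length v < length w" unfolding v_def w by simp
    have s1: "successively adj ([y] @ zs)"
      using less.prems(1) successively_suffix[of adj "xs @ [y] @ ys" "[y] @ zs"] unfolding w by simp
    have s2: "successively adj xs" "xs = [] \<or> adj (last xs) y"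
      using less.prems(1) unfolding w successively_append_iff by auto
    have sv: "successively adj v" unfolding v_def using s1 s2
      by (subst successively_append_iff) auto
    have vne: "v \<noteq> []" unfolding v_def by simp
    obtain w' where w': "successively adj w'" "distinct w'" "w' \<noteq> []" "hd w' = hd v" "last w' = last v"
      "set w' \<subseteq> set v" using less.hyps[OF lv sv vne] by blast
    have "hd v = hd w" unfolding v_def w by (cases xs) auto
    moreover have "last v = last w" unfolding v_def w by (cases zs rule: rev_cases) auto
    moreover have "set v \<subseteq> set w" unfolding v_def w by auto
    ultimately show ?thesis using w' by (intro exI[of _ w']) auto
  qed
qed

lemma walk_len:
  assumes "successively adj w" "w \<noteq> []"
  shows "\<bar>fst (last w) - fst (hd w)\<bar> \<le> int (length w) - 1 \<and> \<bar>snd (last w) - snd (hd w)\<bar> \<le> int (length w) - 1"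
  using assms
proof (induction w)
  case Nil then show ?case by simp
next
  case (Cons a w)
  show ?case
  proof (cases "w = []")
    case True then show ?thesis by simp
  next
    case False
    have sw: "successively adj w" "adj a (hd w)" using Cons.prems(1) False
      by (auto simp: successively_Cons)
    have ih: "\<bar>fst (last w) - fst (hd w)\<bar> \<le> int (length w) - 1" "\<bar>snd (last w) - snd (hd w)\<bar> \<le> int (length w) - 1"
      using Cons.IH[OF sw(1) False] by auto
    have "last (a # w) = last w" using False by simp
    then show ?thesis using ih sw(2) unfolding adj_def by auto
  qed
qed

definition box25 :: "pt \<Rightarrow> (int \<times> int) set" where
  "box25 c = {fst (sqi c) - 2..fst (sqi c) + 2} \<times> {snd (sqi c) - 2..snd (sqi c) + 2}"

lemma card_box25: "card (box25 c) = 25"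
  unfolding box25_def by (simp add: card_cartesian_product)

lemma occ_bound:
  assumes fA: "finite A" and cov: "\<And>y. y \<in> U \<Longrightarrow> \<exists>c\<in>A. \<forall>j\<in>S. dist y c \<le> dist y j"
    and sw: "set w \<subseteq> sqi ` U"
  shows "card {Z\<in>set w. occ S Z} \<le> 25 * card A"
proof -
  have sub: "{Z\<in>set w. occ S Z} \<subseteq> (\<Union>c\<in>A. box25 c)"
  proof
    fix Z assume "Z \<in> {Z\<in>set w. occ S Z}"
    then have Z: "Z \<in> set w" "occ S Z" by auto
    then obtain y where y: "y \<in> U" "Z = sqi y" using sw by auto
    obtain j where j: "j \<in> S" "j \<in> ib Z" using Z(2) unfolding occ_def by auto
    obtain c where c: "c \<in> A" "\<forall>j\<in>S. dist y c \<le> dist y j" using cov[OF y(1)] by blast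
    have ya: "8 * real_of_int (fst Z) \<le> y$1" "y$1 < 8 * real_of_int (fst Z) + 8"
      "8 * real_of_int (snd Z) \<le> y$2" "y$2 < 8 * real_of_int (snd Z) + 8"
      using floor8[of "y$1"] floor8[of "y$2"] y(2) unfolding sqi_def by auto
    have "\<bar>y$1 - j$1\<bar> \<le> 8" "\<bar>y$2 - j$2\<bar> \<le> 8"
      using j(2) ya unfolding mem_ib by (auto simp: abs_le_iff)
    then have "dist y j \<le> 16" using dist_l1[of y j] by linarith
    then have "dist y c \<le> 16" using c j(1) by force
    then have "\<bar>c$1 - y$1\<bar> \<le> 8 * real 2" "\<bar>c$2 - y$2\<bar> \<le> 8 * real 2"
      using comp_le_dist[of y 1 c] comp_le_dist[of y 2 c] by (simp_all add: abs_minus_commute)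
    then have "\<bar>\<lfloor>c$1 / 8\<rfloor> - \<lfloor>y$1 / 8\<rfloor>\<bar> \<le> 2" "\<bar>\<lfloor>c$2 / 8\<rfloor> - \<lfloor>y$2 / 8\<rfloor>\<bar> \<le> 2"
      using floor_diff_bound by (metis of_nat_numeral)+
    then have "Z \<in> box25 c" unfolding box25_def y(2) sqi_def by (auto simp: abs_le_iff)
    then show "Z \<in> (\<Union>c\<in>A. box25 c)" using c(1) by blast
  qed
  have "card {Z\<in>set w. occ S Z} \<le> card (\<Union>c\<in>A. box25 c)"
    using fA by (intro card_mono[OF _ sub]) (auto simp: box25_def)
  also have "\<dots> \<le> (\<Sum>c\<in>A. card (box25 c))" using fA by (rule card_UN_le)
  also have "\<dots> = 25 * card A" by (simp add: card_box25)
  finally show ?thesis .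
qed



lemma edge_in_cell:
  assumes "e \<in> voronoi_edges S"
  shows "\<exists>i\<in>S. e \<subseteq> voronoi_cell S i"
  using assms unfolding voronoi_edges_def by blast

lemma sq_dist_bound:
  assumes "\<bar>fst (sqi y) - fst (sqi p)\<bar> \<le> int n" "\<bar>snd (sqi y) - snd (sqi p)\<bar> \<le> int n"
  shows "dist y p \<le> 16 * (real n + 1)"
proof -
  have a: "8 * real_of_int \<lfloor>y$1/8\<rfloor> \<le> y$1" "y$1 < 8 * real_of_int \<lfloor>y$1/8\<rfloor> + 8"
    "8 * real_of_int \<lfloor>y$2/8\<rfloor> \<le> y$2" "y$2 < 8 * real_of_int \<lfloor>y$2/8\<rfloor> + 8"
    "8 * real_of_int \<lfloor>p$1/8\<rfloor> \<le> p$1" "p$1 < 8 * real_of_int \<lfloor>p$1/8\<rfloor> + 8"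
    "8 * real_of_int \<lfloor>p$2/8\<rfloor> \<le> p$2" "p$2 < 8 * real_of_int \<lfloor>p$2/8\<rfloor> + 8"
    by (rule floor8)+
  have b: "\<bar>real_of_int \<lfloor>y$1/8\<rfloor> - real_of_int \<lfloor>p$1/8\<rfloor>\<bar> \<le> real n"
     "\<bar>real_of_int \<lfloor>y$2/8\<rfloor> - real_of_int \<lfloor>p$2/8\<rfloor>\<bar> \<le> real n"
    using assms unfolding sqi_def by (simp_all add: of_int_abs[symmetric] del: of_int_abs)
  have "y$1 - p$1 \<le> 8 * (real n + 1)" "p$1 - y$1 \<le> 8 * (real n + 1)"
    "y$2 - p$2 \<le> 8 * (real n + 1)" "p$2 - y$2 \<le> 8 * (real n + 1)"
  proof -
    have b1: "real_of_int \<lfloor>y$1/8\<rfloor> - real_of_int \<lfloor>p$1/8\<rfloor> \<le> real n"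
      "real_of_int \<lfloor>p$1/8\<rfloor> - real_of_int \<lfloor>y$1/8\<rfloor> \<le> real n"
      "real_of_int \<lfloor>y$2/8\<rfloor> - real_of_int \<lfloor>p$2/8\<rfloor> \<le> real n"
      "real_of_int \<lfloor>p$2/8\<rfloor> - real_of_int \<lfloor>y$2/8\<rfloor> \<le> real n"
      using b by (auto simp: abs_le_iff)
    show "y$1 - p$1 \<le> 8 * (real n + 1)" using a b1 by argo
    show "p$1 - y$1 \<le> 8 * (real n + 1)" using a b1 by argo
    show "y$2 - p$2 \<le> 8 * (real n + 1)" using a b1 by argo
    show "p$2 - y$2 \<le> 8 * (real n + 1)" using a b1 by argo
  qed
  then have "\<bar>y$1 - p$1\<bar> \<le> 8 * (real n + 1)" "\<bar>y$2 - p$2\<bar> \<le> 8 * (real n + 1)"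
    by auto
  then show ?thesis using dist_l1[of y p] by linarith
qed

lemma path_bound:
  assumes g: "good S n0" and ep: "edge_path S xs" and y: "y \<in> path_edges_union xs"
  shows "\<exists>n. dist y (hd xs) \<le> 16 * (real n + 1) \<and>
     (n \<ge> n0 \<longrightarrow> inbox n (sqi (hd xs)) \<longrightarrow> Suc n < 50 * (length xs - 1))"
proof -
  let ?K = "length xs - 1"
  have xne: "xs \<noteq> []" using ep unfolding edge_path_def by auto
  have edges: "\<And>k. Suc k < length xs \<Longrightarrow> closed_segment (xs!k) (xs!Suc k) \<in> voronoi_edges S"
    using ep unfolding edge_path_def by auto
  have "\<forall>k. \<exists>i. Suc k < length xs \<longrightarrow> i \<in> S \<and> closed_segment (xs!k) (xs!Suc k) \<subseteq> voronoi_cell S i"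
  proof
    fix k show "\<exists>i. Suc k < length xs \<longrightarrow> i \<in> S \<and> closed_segment (xs!k) (xs!Suc k) \<subseteq> voronoi_cell S i"
    proof (cases "Suc k < length xs")
      case True
      then obtain i where "i \<in> S" "closed_segment (xs!k) (xs!Suc k) \<subseteq> voronoi_cell S i"
        using edge_in_cell[OF edges[OF True]] by blast
      then show ?thesis by blast
    qed simp
  qed
  from choice[OF this] obtain af where af:
    "\<And>k. Suc k < length xs \<Longrightarrow> af k \<in> S \<and> closed_segment (xs!k) (xs!Suc k) \<subseteq> voronoi_cell S (af k)"
    by blast
  define A where "A = af ` {..<?K}"
  have fA: "finite A" and cA: "card A \<le> ?K" unfolding A_def
    using card_image_le[of "{..<?K}" af] by auto
  obtain k0 where k0: "Suc k0 < length xs" "y \<in> closed_segment (xs!k0) (xs!Suc k0)"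
    using y unfolding path_edges_union_def by blast
  have hdin: "hd xs \<in> path_edges_union xs"
  proof -
    have "hd xs = xs ! 0" using xne by (simp add: hd_conv_nth)
    then have "hd xs \<in> closed_segment (xs!0) (xs!Suc 0)" by simp
    then show ?thesis unfolding path_edges_union_def using k0(1) by (intro UN_I[of 0]) auto
  qed
  let ?U = "path_edges_union xs"
  have cov: "\<exists>c\<in>A. \<forall>j\<in>S. dist y' c \<le> dist y' j" if yU: "y' \<in> ?U" for y'
  proof -
    obtain k where k: "Suc k < length xs" "y' \<in> closed_segment (xs!k) (xs!Suc k)"
      using yU unfolding path_edges_union_def by blast
    then have "y' \<in> voronoi_cell S (af k)" using af[OF k(1)] by blast
    moreover have "af k \<in> A" unfolding A_def using k(1) by auto
    ultimately have "\<forall>j\<in>S. dist y' (af k) \<le> dist y' j" unfolding voronoi_cell_def by simp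
    then show ?thesis using \<open>af k \<in> A\<close> by blast
  qed
  have yP: "y \<in> polyU xs \<union> {hd xs}" using y polyU_eq by auto
  obtain qs where qs: "qs \<noteq> []" "hd qs = hd xs" "last qs = y" "set qs \<subseteq> polyU xs \<union> {hd xs}"
    "successively step8 qs" using sample_poly[OF xne yP] by blast
  have sqs: "successively adj (map sqi qs)"
    unfolding successively_map using qs(5) by (rule successively_mono) (rule adj_of_step8)
  obtain w where w: "successively adj w" "distinct w" "w \<noteq> []" "hd w = hd (map sqi qs)"
    "last w = last (map sqi qs)" "set w \<subseteq> set (map sqi qs)"
    using loop_remove[OF sqs] qs(1) by auto
  have hw: "hd w = sqi (hd xs)" using w(4) qs(1,2) by (simp add: hd_map)
  have lw: "last w = sqi y" using w(5) qs(1,3) by (simp add: last_map)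
  have setw: "set w \<subseteq> sqi ` ?U"
  proof -
    have "polyU xs \<union> {hd xs} = ?U" using hdin polyU_eq by auto
    moreover have "set w \<subseteq> sqi ` set qs" using w(6) by simp
    ultimately show ?thesis using qs(4) by (metis image_mono order_trans)
  qed
  define n where "n = length w - 1"
  have lwn: "length w = Suc n" unfolding n_def using w(3) by simp
  have "\<bar>fst (sqi y) - fst (sqi (hd xs))\<bar> \<le> int n" "\<bar>snd (sqi y) - snd (sqi (hd xs))\<bar> \<le> int n"
    using walk_len[OF w(1,3)] hw lw lwn by auto
  then have d: "dist y (hd xs) \<le> 16 * (real n + 1)" by (rule sq_dist_bound)
  have "Suc n < 50 * ?K" if n0: "n \<ge> n0" and ib: "inbox n (sqi (hd xs))"
  proof -
    have "w \<in> Wn n" unfolding Wn_def walk_succ using w(1,2) lwn ib hw by auto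
    then have "Suc n < 2 * card {Z\<in>set w. occ S Z}" using g n0 unfolding good_def by blast
    also have "card {Z\<in>set w. occ S Z} \<le> 25 * card A" by (rule occ_bound[OF fA cov setw])
    finally show ?thesis using cA by linarith
  qed
  then show ?thesis using d by blast
qed



definition UT :: "(int \<times> int) set \<Rightarrow> pt set" where
  "UT T = (\<Union>Z\<in>T. ib Z)"

lemma ib_nonempty: "ib Z \<noteq> {}"
proof -
  have "vec2 (8 * real_of_int (fst Z) + 2) (8 * real_of_int (snd Z) + 2) \<in> ib Z"
    unfolding mem_ib by simp
  then show ?thesis by blast
qed

lemma measure_ib: "measure lborel (ib Z) = 16"
proof -
  have "measure lborel (ib Z) = (\<Prod>i\<in>UNIV. (vec2 (8 * real_of_int (fst Z) + 6) (8 * real_of_int (snd Z) + 6)) $ i -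
      (vec2 (8 * real_of_int (fst Z) + 2) (8 * real_of_int (snd Z) + 2)) $ i)"
    using ib_nonempty[of Z] unfolding ib_def by (rule content_cbox_cart)
  also have "\<dots> = 16" by (simp add: UNIV_2)
  finally show ?thesis .
qed

lemma ib_disjoint: "Z \<noteq> Z' \<Longrightarrow> disjnt (ib Z) (ib Z')"
proof -
  assume ne: "Z \<noteq> Z'"
  show ?thesis unfolding disjnt_def
  proof (rule ccontr)
    assume "ib Z \<inter> ib Z' \<noteq> {}"
    then obtain x where "x \<in> ib Z" "x \<in> ib Z'" by blast
    then have h: "8 * real_of_int (fst Z) + 2 \<le> x$1" "x$1 \<le> 8 * real_of_int (fst Z) + 6"
      "8 * real_of_int (snd Z) + 2 \<le> x$2" "x$2 \<le> 8 * real_of_int (snd Z) + 6"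
      "8 * real_of_int (fst Z') + 2 \<le> x$1" "x$1 \<le> 8 * real_of_int (fst Z') + 6"
      "8 * real_of_int (snd Z') + 2 \<le> x$2" "x$2 \<le> 8 * real_of_int (snd Z') + 6"
      unfolding mem_ib by auto
    then have "real_of_int (fst Z) - real_of_int (fst Z') < 1" "real_of_int (fst Z') - real_of_int (fst Z) < 1"
      "real_of_int (snd Z) - real_of_int (snd Z') < 1" "real_of_int (snd Z') - real_of_int (snd Z) < 1"
      by argo+
    then have "fst Z = fst Z'" "snd Z = snd Z'" by linarith+
    then show False using ne by (simp add: prod_eq_iff)
  qed
qed

lemma ib_borel: "ib Z \<in> sets lborel"
  unfolding ib_def by simp

lemma UT_props:
  assumes "finite T"
  shows "UT T \<in> sets lborel" "bounded (UT T)" "measure lborel (UT T) = 16 * real (card T)"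
proof -
  show "UT T \<in> sets lborel" unfolding UT_def using assms ib_borel by auto
  show "bounded (UT T)" unfolding UT_def using assms by (auto simp: ib_def)
  have "measure lborel (UT T) = (\<Sum>Z\<in>T. measure lborel (ib Z))" unfolding UT_def
  proof (rule measure_UNION'[OF assms])
    show "ib Z \<in> fmeasurable lborel" for Z unfolding ib_def by (simp add: fmeasurable_cbox)
    show "pairwise (\<lambda>i j. disjnt (ib i) (ib j)) T" unfolding pairwise_def using ib_disjoint by blast
  qed
  then show "measure lborel (UT T) = 16 * real (card T)" by (simp add: measure_ib)
qed

definition WW :: "(int \<times> int) set \<Rightarrow> nat \<Rightarrow> (int \<times> int) list set" where
  "WW B n = {w. successively adj w \<and> length w = Suc n \<and> hd w \<in> B}"

definition Dir :: "(int \<times> int) set" where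
  "Dir = {-1..1} \<times> {-1..1}"

lemma card_Dir: "card Dir = 9" and finite_Dir: "finite Dir"
  unfolding Dir_def by (simp_all add: card_cartesian_product)

lemma WW_0: "WW B 0 = (\<lambda>z. [z]) ` B"
proof (intro equalityI subsetI)
  fix w assume "w \<in> WW B 0"
  then have "length w = 1" "hd w \<in> B" unfolding WW_def by auto
  then show "w \<in> (\<lambda>z. [z]) ` B" by (cases w) auto
qed (auto simp: WW_def)

lemma WW_Suc: "WW B (Suc n) \<subseteq> (\<lambda>(w, d). w @ [(fst (last w) + fst d, snd (last w) + snd d)]) ` (WW B n \<times> Dir)"
proof
  fix w assume w: "w \<in> WW B (Suc n)"
  then have sw: "successively adj w" and lw: "length w = Suc (Suc n)" and hw: "hd w \<in> B"
    unfolding WW_def by auto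
  define u where "u = butlast w"
  have wu: "w = u @ [last w]" unfolding u_def using lw
    by (metis append_butlast_last_id list.size(3) nat.distinct(1))
  have une: "u \<noteq> []" using lw unfolding u_def by (cases w rule: rev_cases) auto
  have su: "successively adj u" "adj (last u) (last w)"
    using sw une unfolding successively_append_iff[of adj u "[last w]", folded wu] by auto
  have "hd u = hd w" using wu une by (metis hd_append2)
  then have "u \<in> WW B n" unfolding WW_def using su(1) hw lw unfolding u_def by auto
  moreover define d where "d = (fst (last w) - fst (last u), snd (last w) - snd (last u))"
  have "d \<in> Dir" unfolding Dir_def d_def using su(2) unfolding adj_def by auto
  moreover have "w = u @ [(fst (last u) + fst d, snd (last u) + snd d)]"
    using wu unfolding d_def by simp
  ultimately show "w \<in> (\<lambda>(w, d). w @ [(fst (last w) + fst d, snd (last w) + snd d)]) ` (WW B n \<times> Dir)"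
    by force
qed

lemma WW_card:
  assumes "finite B"
  shows "finite (WW B n) \<and> card (WW B n) \<le> card B * 9 ^ n"
proof (induction n)
  case 0
  then show ?case using assms unfolding WW_0 by (auto intro: card_image_le)
next
  case (Suc n)
  let ?f = "\<lambda>(w, d). w @ [(fst (last w) + fst d, snd (last w) + snd d)]"
  have fin: "finite (WW B n \<times> Dir)" using Suc finite_Dir by auto
  have "card (WW B (Suc n)) \<le> card (?f ` (WW B n \<times> Dir))"
    by (rule card_mono[OF finite_imageI[OF fin] WW_Suc])
  also have "\<dots> \<le> card (WW B n \<times> Dir)" by (rule card_image_le[OF fin])
  also have "\<dots> = card (WW B n) * 9" by (simp add: card_cartesian_product card_Dir)
  also have "\<dots> \<le> card B * 9 ^ n * 9" using Suc by simp
  finally have "card (WW B (Suc n)) \<le> card B * 9 ^ Suc n" by (simp add: mult.assoc mult.commute)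
  moreover have "finite (WW B (Suc n))" using finite_subset[OF WW_Suc finite_imageI[OF fin]] .
  ultimately show ?case by blast
qed

definition boxn :: "nat \<Rightarrow> (int \<times> int) set" where
  "boxn n = {- int (n*n)..int (n*n)} \<times> {- int (n*n)..int (n*n)}"

lemma poly_le_9: "(2 * n * n + 1) ^ 2 \<le> (9::nat) ^ n"
proof (induction n)
  case 0 then show ?case by simp
next
  case (Suc n)
  have "2 * Suc n * Suc n + 1 \<le> 3 * (2 * n * n + 1)"
  proof (cases n)
    case 0 then show ?thesis by simp
  next
    case (Suc m) then show ?thesis by (simp add: algebra_simps)
  qed
  then have "(2 * Suc n * Suc n + 1) ^ 2 \<le> (3 * (2 * n * n + 1)) ^ 2" by (rule power_mono) simp
  also have "\<dots> = 9 * (2 * n * n + 1) ^ 2" unfolding power_mult_distrib by simp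
  also have "\<dots> \<le> 9 * 9 ^ n" using Suc by simp
  finally show ?case by simp
qed

lemma Wn_card: "finite (Wn n) \<and> card (Wn n) \<le> 81 ^ n"
proof -
  have sub: "Wn n \<subseteq> WW (boxn n) n" unfolding Wn_def WW_def walk_succ boxn_def inbox_def
    by (auto simp: abs_le_iff mem_Times_iff)
  have fb: "finite (boxn n)" unfolding boxn_def by simp
  have c1: "card {- int (n*n)..int (n*n)} = 2 * n * n + 1"
  proof -
    have "card {- int (n*n)..int (n*n)} = nat (int (n*n) - (- int (n*n)) + 1)" by simp
    also have "int (n*n) - (- int (n*n)) + 1 = int (2 * n * n + 1)" by simp
    finally show ?thesis by (simp only: nat_int)
  qed
  have cb: "card (boxn n) = (2 * n * n + 1) ^ 2" unfolding boxn_def card_cartesian_product c1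
    by (simp add: power2_eq_square)
  have w: "finite (WW (boxn n) n)" "card (WW (boxn n) n) \<le> card (boxn n) * 9 ^ n"
    using WW_card[OF fb] by auto
  have "card (Wn n) \<le> card (boxn n) * 9 ^ n" using card_mono[OF w(1) sub] w(2) by linarith
  also have "\<dots> \<le> 9 ^ n * 9 ^ n" unfolding cb using poly_le_9[of n] by simp
  also have "\<dots> = 81 ^ n" by (simp add: power_mult_distrib[symmetric])
  finally show ?thesis using finite_subset[OF sub w(1)] by blast
qed



definition EE :: "'w measure \<Rightarrow> ('w \<Rightarrow> pt set) \<Rightarrow> (int \<times> int) set \<Rightarrow> 'w set" where
  "EE P N T = {\<omega>\<in>space P. card (N \<omega> \<inter> UT T) = 0}"

lemma EE_prob:
  assumes pp: "poisson_process P N" and fT: "finite T"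
  shows "EE P N T \<in> sets P" "measure P (EE P N T) = exp (- 16 * real (card T))"
proof -
  have u: "UT T \<in> sets lborel" "bounded (UT T)" "measure lborel (UT T) = 16 * real (card T)"
    using UT_props[OF fT] by auto
  have "measure P (EE P N T) = exp (- measure lborel (UT T)) * (measure lborel (UT T)) ^ 0 / fact 0"
  proof -
    have "\<forall>A. A \<in> sets lborel \<and> bounded A \<longrightarrow>
        (\<forall>k::nat. measure P {\<omega> \<in> space P. card (N \<omega> \<inter> A) = k}
              = exp (- measure lborel A) * (measure lborel A) ^ k / fact k)"
      using pp unfolding poisson_process_def by (elim conjE)
    then have "\<forall>k::nat. measure P {\<omega> \<in> space P. card (N \<omega> \<inter> UT T) = k}
              = exp (- measure lborel (UT T)) * (measure lborel (UT T)) ^ k / fact k"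
      using u(1,2) by blast
    then show ?thesis unfolding EE_def by blast
  qed
  then show m: "measure P (EE P N T) = exp (- 16 * real (card T))" using u(3) by simp
  show "EE P N T \<in> sets P"
  proof (rule ccontr)
    assume "EE P N T \<notin> sets P"
    then have "measure P (EE P N T) = 0" by (rule measure_notin_sets)
    then show False using m by simp
  qed
qed

definition TT :: "nat \<Rightarrow> (int \<times> int) set set" where
  "TT n = {T. \<exists>w\<in>Wn n. T \<subseteq> set w \<and> Suc n \<le> 2 * card T}"

lemma TT_card: "finite (TT n) \<and> card (TT n) \<le> 81 ^ n * 2 ^ Suc n"
proof -
  have wc: "finite (Wn n)" "card (Wn n) \<le> 81 ^ n" using Wn_card by auto
  have sub: "TT n \<subseteq> (\<Union>w\<in>Wn n. Pow (set w))"
  proof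
    fix T assume "T \<in> TT n"
    then obtain w where "w \<in> Wn n" "T \<subseteq> set w" unfolding TT_def by blast
    then show "T \<in> (\<Union>w\<in>Wn n. Pow (set w))" by blast
  qed
  have fU: "finite (\<Union>w\<in>Wn n. Pow (set w))" using wc(1) by simp
  have "card (TT n) \<le> card (\<Union>w\<in>Wn n. Pow (set w))" by (rule card_mono[OF fU sub])
  also have "\<dots> \<le> (\<Sum>w\<in>Wn n. card (Pow (set w)))" by (rule card_UN_le[OF wc(1)])
  also have "\<dots> = (\<Sum>w\<in>Wn n. 2 ^ Suc n)"
  proof (rule sum.cong)
    fix w assume "w \<in> Wn n"
    then have "distinct w" "length w = Suc n" unfolding Wn_def by auto
    then have "card (set w) = Suc n" using distinct_card by metis
    then show "card (Pow (set w)) = 2 ^ Suc n" using card_Pow[of "set w"] by simp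
  qed simp
  also have "\<dots> = card (Wn n) * 2 ^ Suc n" by simp
  also have "\<dots> \<le> 81 ^ n * 2 ^ Suc n" using wc(2) by simp
  finally show ?thesis using finite_subset[OF sub fU] by blast
qed

definition FF :: "'w measure \<Rightarrow> ('w \<Rightarrow> pt set) \<Rightarrow> nat \<Rightarrow> 'w set" where
  "FF P N n = (\<Union>T\<in>TT n. EE P N T)"

lemma TT_finite_mem: "T \<in> TT n \<Longrightarrow> finite T"
proof -
  assume "T \<in> TT n"
  then obtain w where "T \<subseteq> set w" unfolding TT_def by blast
  then show "finite T" using finite_subset by blast
qed

lemma exp8: "exp (8::real) \<ge> 256"
proof -
  have e1: "2 \<le> exp (1::real)" using exp_ge_add_one_self[of 1] by simp
  have p: "(2::real) ^ 8 \<le> exp 1 ^ 8" by (rule power_mono[OF e1]) simp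
  have "exp (8::real) = exp (real 8 * 1)" by simp
  also have "\<dots> = exp 1 ^ 8" by (rule exp_of_nat_mult)
  finally have "exp (8::real) = exp 1 ^ 8" .
  moreover have "(2::real) ^ 8 = 256" by simp
  ultimately show ?thesis using p by argo
qed

lemma FF_meas:
  assumes pp: "poisson_process P N"
  shows "FF P N n \<in> sets P" "measure P (FF P N n) \<le> 2 * (162 / 256) ^ n"
proof -
  have PS: "prob_space P" using pp unfolding poisson_process_def by (elim conjE)
  then interpret prob_space P .
  have tc: "finite (TT n)" "card (TT n) \<le> 81 ^ n * 2 ^ Suc n" using TT_card by auto
  have sets: "EE P N ` TT n \<subseteq> sets P" using EE_prob(1)[OF pp TT_finite_mem] by blast
  then show "FF P N n \<in> sets P" unfolding FF_def using tc(1) by auto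
  have "measure P (FF P N n) \<le> (\<Sum>T\<in>TT n. measure P (EE P N T))"
    unfolding FF_def by (rule finite_measure_subadditive_finite[OF tc(1) sets])
  also have "\<dots> \<le> (\<Sum>T\<in>TT n. exp (- 8 * real (Suc n)))"
  proof (rule sum_mono)
    fix T assume T: "T \<in> TT n"
    then have "real (Suc n) \<le> 2 * real (card T)" unfolding TT_def by auto
    then have "- 16 * real (card T) \<le> - 8 * real (Suc n)" by simp
    then show "measure P (EE P N T) \<le> exp (- 8 * real (Suc n))"
      using EE_prob(2)[OF pp TT_finite_mem[OF T]] by simp
  qed
  also have "\<dots> = real (card (TT n)) * exp (- 8 * real (Suc n))" by simp
  also have "\<dots> \<le> real (81 ^ n * 2 ^ Suc n) * exp (- 8 * real (Suc n))"
  proof (rule mult_right_mono)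
    show "real (card (TT n)) \<le> real (81 ^ n * 2 ^ Suc n)" using tc(2) by (simp only: of_nat_le_iff)
  qed simp
  also have "\<dots> = 2 * (162 * exp (-8)) ^ n * exp (-8)"
  proof -
    have "exp (- 8 * real (Suc n)) = exp (-8) ^ Suc n"
      using exp_of_nat_mult[of "Suc n" "-8::real"] by (simp add: mult.commute)
    moreover have "(81::real) ^ n * 2 ^ n = 162 ^ n" by (simp add: power_mult_distrib[symmetric])
    ultimately show ?thesis by (simp add: power_mult_distrib)
  qed
  also have "\<dots> \<le> 2 * (162 / 256) ^ n * 1"
  proof (intro mult_mono mult_left_mono power_mono)
    have e: "exp (-8::real) \<le> 1 / 256" using exp8 by (simp add: exp_minus field_simps)
    then show "162 * exp (-8::real) \<le> 162 / 256" by simp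
    show "exp (-8::real) \<le> 1" by simp
  qed simp_all
  finally show "measure P (FF P N n) \<le> 2 * (162 / 256) ^ n" by simp
qed

lemma AE_good:
  assumes pp: "poisson_process P N"
  shows "AE \<omega> in P. \<exists>n0. good (N \<omega>) n0"
proof -
  have PS: "prob_space P" using pp unfolding poisson_process_def by (elim conjE)
  then interpret prob_space P .
  have meas: "\<And>n. FF P N n \<in> sets P" using FF_meas(1)[OF pp] .
  have fin: "\<And>n. emeasure P (FF P N n) < \<infinity>" by (simp add: less_top[symmetric])
  have summ: "summable (\<lambda>n. measure P (FF P N n))"
  proof (rule summable_comparison_test')
    show "summable (\<lambda>n. 2 * (162 / 256 :: real) ^ n)" by (intro summable_mult summable_geometric) simp
    show "norm (measure P (FF P N n)) \<le> 2 * (162 / 256) ^ n" for n using FF_meas(2)[OF pp, of n] by simp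
  qed
  have ae: "AE \<omega> in P. eventually (\<lambda>n. \<omega> \<in> space P - FF P N n) sequentially"
    by (rule borel_cantelli_AE1[OF meas fin summ])
  show ?thesis
  proof (rule AE_mp[OF ae], rule AE_I2, intro impI)
    fix \<omega> assume sp: "\<omega> \<in> space P" and ev: "eventually (\<lambda>n. \<omega> \<in> space P - FF P N n) sequentially"
    then obtain n0 where n0: "\<And>n. n \<ge> n0 \<Longrightarrow> \<omega> \<notin> FF P N n" unfolding eventually_sequentially by blast
    have "good (N \<omega>) n0" unfolding good_def
    proof (intro allI impI ballI)
      fix n w assume n: "n \<ge> n0" and w: "w \<in> Wn n"
      show "Suc n < 2 * card {Z\<in>set w. occ (N \<omega>) Z}"
      proof (rule ccontr)
        assume H: "\<not> ?thesis"
        define T where "T = {Z\<in>set w. \<not> occ (N \<omega>) Z}"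
        have "distinct w" "length w = Suc n" using w unfolding Wn_def by auto
        then have cw: "card (set w) = Suc n" using distinct_card by metis
        have "set w = {Z\<in>set w. occ (N \<omega>) Z} \<union> T" "{Z\<in>set w. occ (N \<omega>) Z} \<inter> T = {}"
          unfolding T_def by auto
        then have "card (set w) = card {Z\<in>set w. occ (N \<omega>) Z} + card T"
          by (metis List.finite_set card_Un_disjoint finite_Un)
        then have "Suc n \<le> 2 * card T" using H cw by linarith
        then have TT: "T \<in> TT n" unfolding TT_def using w T_def by blast
        have "N \<omega> \<inter> UT T = {}" unfolding UT_def T_def occ_def by auto
        then have "\<omega> \<in> EE P N T" unfolding EE_def using sp by simp
        then have "\<omega> \<in> FF P N n" unfolding FF_def using TT by blast
        then show False using n0 n by blast
      qed
    qed
    then show "\<exists>n0. good (N \<omega>) n0" by blast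
  qed
qed



lemma last_in_union:
  assumes "length xs \<ge> 2"
  shows "last xs \<in> path_edges_union xs" "hd xs \<in> path_edges_union xs"
proof -
  let ?k = "length xs - 2"
  have k: "Suc ?k < length xs" using assms by simp
  have e: "Suc ?k = length xs - 1" using assms by simp
  have "xs \<noteq> []" using assms by auto
  then have "last xs = xs ! Suc ?k" unfolding e by (simp add: last_conv_nth)
  then have "last xs \<in> closed_segment (xs ! ?k) (xs ! Suc ?k)" by simp
  then show "last xs \<in> path_edges_union xs" unfolding path_edges_union_def using k by blast
  have "hd xs = xs ! 0" using \<open>xs \<noteq> []\<close> by (simp add: hd_conv_nth)
  then have "hd xs \<in> closed_segment (xs ! 0) (xs ! Suc 0)" by simp
  then show "hd xs \<in> path_edges_union xs" unfolding path_edges_union_def using assms by force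
qed

lemma union_short: "length xs < 2 \<Longrightarrow> path_edges_union xs = {}"
  unfolding path_edges_union_def by auto

lemma dichotomy:
  assumes g: "good S n0" and ep: "edge_path S xs" and y: "y \<in> path_edges_union xs"
    and np: "norm (hd xs) \<le> B" and Bt: "B < 8 * (t / 1000)^2" and t0: "t \<ge> 0"
  shows "dist y (hd xs) \<le> 16 * (real n0 + t / 1000 + 1) \<or> dist y (hd xs) \<le> 800 * real (length xs - 1)"
proof -
  obtain n1 where n1: "dist y (hd xs) \<le> 16 * (real n1 + 1)"
    "n1 \<ge> n0 \<longrightarrow> inbox n1 (sqi (hd xs)) \<longrightarrow> Suc n1 < 50 * (length xs - 1)"
    using path_bound[OF g ep y] by blast
  show ?thesis
  proof (cases "n1 < n0")
    case True
    then have "real n1 \<le> real n0" by simp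
    then show ?thesis using n1(1) t0 by (intro disjI1) argo
  next
    case False
    show ?thesis
    proof (cases "inbox n1 (sqi (hd xs))")
      case True
      then have "Suc n1 < 50 * (length xs - 1)" using n1(2) False by simp
      then have "real n1 + 1 \<le> 50 * real (length xs - 1)" by linarith
      then show ?thesis using n1(1) by (intro disjI2) argo
    next
      case False2: False
      have "\<not> norm (hd xs) \<le> 8 * real (n1 * n1)" using inbox_of_norm False2 by blast
      then have "8 * (real n1 * real n1) < 8 * ((t / 1000) * (t / 1000))"
        using np Bt by (simp add: power2_eq_square)
      then have "real n1 * real n1 < (t / 1000) * (t / 1000)" by simp
      then have "real n1 < t / 1000" using t0
        by (metis mult_mono not_less of_nat_0_le_iff divide_nonneg_pos zero_less_numeral)
      moreover have "real n0 \<ge> 0" by simp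
      ultimately show ?thesis using n1(1) by (intro disjI1) argo
    qed
  qed
qed



lemma quad_ev:
  fixes a b c :: real
  assumes c: "c > 0"
  shows "\<forall>\<^sub>F t in at_top. a * t + b < c * t^2"
proof -
  let ?T = "max 1 ((\<bar>a\<bar> + \<bar>b\<bar> + 1) / c)"
  show ?thesis
  proof (rule eventually_mono[OF eventually_ge_at_top[of ?T]])
    fix t :: real assume t: "?T \<le> t"
    then have t1: "t \<ge> 1" and t2: "(\<bar>a\<bar> + \<bar>b\<bar> + 1) / c \<le> t" by auto
    then have ct: "\<bar>a\<bar> + \<bar>b\<bar> + 1 \<le> c * t" using c by (simp add: divide_le_eq mult.commute)
    have "a * t + b < (\<bar>a\<bar> + \<bar>b\<bar> + 1) * t"
    proof -
      have f1: "a * t \<le> \<bar>a\<bar> * t" using t1 by (intro mult_right_mono) auto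
      have "\<bar>b\<bar> * 1 \<le> \<bar>b\<bar> * t" using t1 by (intro mult_left_mono) auto
      then have f2: "b \<le> \<bar>b\<bar> * t" by linarith
      have f3: "(\<bar>a\<bar> + \<bar>b\<bar> + 1) * t = \<bar>a\<bar> * t + \<bar>b\<bar> * t + t" by (simp add: algebra_simps)
      show ?thesis unfolding f3 using f1 f2 t1 by linarith
    qed
    also have "\<dots> \<le> (c * t) * t" using ct t1 by (intro mult_right_mono) auto
    finally show "a * t + b < c * t^2" by (simp add: power2_eq_square mult.assoc)
  qed
qed

lemma main_det:
  assumes g: "good S n0" and lf: "locfin S" and C: "C > 0" and M: "M > 0"
  shows "\<forall>\<^sub>F t in at_top.
     \<forall>x v p q xs. norm x \<le> C * t \<longrightarrow> norm v = 1 \<longrightarrow>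
       closest_point (voronoi_vertices S) x p \<longrightarrow>
       closest_point (voronoi_vertices S) (x + t *\<^sub>R v) q \<longrightarrow>
       edge_path S xs \<longrightarrow> hd xs = p \<longrightarrow> last xs = q \<longrightarrow>
       real (length xs - 1) \<le> t * M \<longrightarrow>
       (\<forall>y\<in>path_edges_union xs. dist y x \<le> 1600 * M * t)"
proof -
  define c1 where "c1 = 16 * real n0 + 136"
  define H where "H t = 16 * (t / 1000) + c1" for t :: real
  have E1: "\<forall>\<^sub>F t in at_top. (C + 1) * t + 38 < (4 / 1000000) * t^2"
    by (rule quad_ev) simp
  have E2: "\<forall>\<^sub>F t in at_top. (C + 16 / 1000) * t + c1 < (8 / 1000000) * t^2"
    by (rule quad_ev) simp
  have E3: "\<forall>\<^sub>F t in at_top. 3 * c1 + 16 * real n0 + 16 < (936 / 1000) * t"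
  proof (rule eventually_mono[OF eventually_gt_at_top[of "2 * (3 * c1 + 16 * real n0 + 16)"]])
    fix t :: real assume "2 * (3 * c1 + 16 * real n0 + 16) < t"
    moreover have "c1 \<ge> 0" unfolding c1_def by simp
    ultimately show "3 * c1 + 16 * real n0 + 16 < (936 / 1000) * t" by simp
  qed
  have E0: "\<forall>\<^sub>F t in at_top. (0::real) \<le> t" by (rule eventually_ge_at_top)
  show ?thesis
  proof (rule eventually_mono[OF eventually_conj[OF E0 eventually_conj[OF E1 eventually_conj[OF E2 E3]]]],
      intro allI impI ballI)
    fix t :: real and x v p q xs y
    assume ts: "0 \<le> t \<and> (C + 1) * t + 38 < (4 / 1000000) * t^2 \<and>
        (C + 16 / 1000) * t + c1 < (8 / 1000000) * t^2 \<and> 3 * c1 + 16 * real n0 + 16 < (936 / 1000) * t"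
      and nx: "norm x \<le> C * t" and nv: "norm v = 1"
      and cp: "closest_point (voronoi_vertices S) x p"
      and cq: "closest_point (voronoi_vertices S) (x + t *\<^sub>R v) q"
      and ep: "edge_path S xs" and hp: "hd xs = p" and lq: "last xs = q"
      and K: "real (length xs - 1) \<le> t * M" and y: "y \<in> path_edges_union xs"
    have t0: "0 \<le> t" and e1: "(C + 1) * t + 38 < (4 / 1000000) * t^2"
      and e2: "(C + 16 / 1000) * t + c1 < (8 / 1000000) * t^2"
      and e3: "3 * c1 + 16 * real n0 + 16 < (936 / 1000) * t" using ts by auto
    define n where "n = n0 + 6 + nat \<lceil>t / 1000\<rceil>"
    have nge: "real n \<ge> t / 1000" "n \<ge> 6" "n \<ge> n0" unfolding n_def
      using real_nat_ceiling_ge[of "t / 1000"] by auto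
    have nle: "real n \<le> real n0 + 7 + t / 1000" unfolding n_def
    proof -
      have "real (nat \<lceil>t / 1000\<rceil>) = real_of_int \<lceil>t / 1000\<rceil>" using t0 by simp
      also have "\<dots> \<le> t / 1000 + 1" by linarith
      finally show "real (n0 + 6 + nat \<lceil>t / 1000\<rceil>) \<le> real n0 + 7 + t / 1000" by simp
    qed
    have sq: "(t / 1000)^2 \<le> real n * real n"
    proof -
      have "(t / 1000)^2 \<le> (real n)^2" using nge(1) t0 by (intro power_mono) auto
      then show ?thesis by (simp add: power2_eq_square)
    qed
    have big: "norm z \<le> (C + 1) * t \<Longrightarrow> norm z + 3 * (8 * real n + 12) + 2 \<le> 8 * real (n*n)" for z
    proof -
      assume z: "norm z \<le> (C + 1) * t"
      have "6 \<le> real n" using nge(2) by simp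
      then have "6 * real n \<le> real n * real n" by (intro mult_right_mono) auto
      then have "24 * real n \<le> 4 * (real n * real n)" by simp
      moreover have "(4 / 1000000) * t^2 = 4 * (t / 1000)^2" by (simp add: power2_eq_square)
      ultimately show ?thesis using z e1 sq by simp
    qed
    have Hdef: "2 * (8 * real n + 12) \<le> H t" unfolding H_def c1_def using nle by simp
    obtain v1 where v1: "v1 \<in> voronoi_vertices S" "dist x v1 \<le> 2 * (8 * real n + 12)"
      using vertex_near[OF g lf nge(3) big[of x]] nx C t0 by (auto simp: algebra_simps)
    have "dist x p \<le> dist x v1" using cp v1(1) unfolding closest_point_def by blast
    then have dxp: "dist x p \<le> H t" using v1(2) Hdef by linarith
    have ntv: "norm (t *\<^sub>R v) = t" using nv t0 by simp
    have nxt: "norm (x + t *\<^sub>R v) \<le> (C + 1) * t"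
      using norm_triangle_ineq[of x "t *\<^sub>R v"] ntv nx by (simp add: algebra_simps)
    obtain v2 where v2: "v2 \<in> voronoi_vertices S" "dist (x + t *\<^sub>R v) v2 \<le> 2 * (8 * real n + 12)"
      using vertex_near[OF g lf nge(3) big[OF nxt]] by blast
    have "dist (x + t *\<^sub>R v) q \<le> dist (x + t *\<^sub>R v) v2" using cq v2(1) unfolding closest_point_def by blast
    then have dxq: "dist (x + t *\<^sub>R v) q \<le> H t" using v2(2) Hdef by linarith
    have l2: "length xs \<ge> 2"
    proof (rule ccontr)
      assume "\<not> length xs \<ge> 2"
      then have "path_edges_union xs = {}" by (intro union_short) simp
      then show False using y by simp
    qed
    have np: "norm p \<le> C * t + H t"
      using norm_triangle_ineq2[of p x] dxp nx by (simp add: dist_norm norm_minus_commute)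
    have Bt: "C * t + H t < 8 * (t / 1000)^2"
      using e2 unfolding H_def by (simp add: power2_eq_square algebra_simps)
    have D: "\<And>y'. y' \<in> path_edges_union xs \<Longrightarrow>
        dist y' p \<le> 16 * (real n0 + t / 1000 + 1) \<or> dist y' p \<le> 800 * real (length xs - 1)"
      using dichotomy[OF g ep _ _ Bt t0] np hp by blast
    have qU: "q \<in> path_edges_union xs" using last_in_union[OF l2] lq by simp
    have "t = dist x (x + t *\<^sub>R v)" using ntv by (simp add: dist_norm)
    also have "\<dots> \<le> dist x p + dist p (x + t *\<^sub>R v)" by (rule dist_triangle)
    also have "dist p (x + t *\<^sub>R v) \<le> dist p q + dist q (x + t *\<^sub>R v)" by (rule dist_triangle)
    finally have tpq0: "t \<le> dist x p + (dist p q + dist q (x + t *\<^sub>R v))" by simp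
    then have tpq: "t \<le> 2 * H t + dist q p" using dxp dxq by (simp add: dist_commute)
    have e3': "3 * H t + 16 * (real n0 + t / 1000 + 1) < t" using e3 unfolding H_def by simp
    have Kb: "t - 2 * H t \<le> 800 * real (length xs - 1)"
    proof -
      have "H t \<ge> 0" unfolding H_def c1_def using t0 by simp
      then have "\<not> dist q p \<le> 16 * (real n0 + t / 1000 + 1)" using tpq e3' by linarith
      then show ?thesis using D[OF qU] tpq by linarith
    qed
    have "dist y x \<le> dist y p + dist p x" by (rule dist_triangle)
    moreover have "dist y p \<le> 16 * (real n0 + t / 1000 + 1) + 800 * real (length xs - 1)"
    proof -
      have "0 \<le> 16 * (real n0 + t / 1000 + 1)" using t0 by simp
      moreover have "0 \<le> 800 * real (length xs - 1)" by simp
      ultimately show ?thesis using D[OF y] by linarith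
    qed
    moreover have "800 * real (length xs - 1) \<le> 800 * (M * t)" using K by (simp add: mult.commute)
    ultimately show "dist y x \<le> 1600 * M * t"
      using dxp Kb e3' by (simp add: dist_commute)
  qed
qed


theorem mainTheorem9:
  fixes P :: "'w measure" and N :: "'w \<Rightarrow> pt set"
  assumes "poisson_process P N"
  shows "\<exists>C0::real. AE \<omega> in P. \<forall>C>0. \<forall>M>0. \<forall>\<^sub>F t in at_top.
     \<forall>x v p q xs. norm x \<le> C * t \<longrightarrow> norm v = 1 \<longrightarrow>
       closest_point (voronoi_vertices (N \<omega>)) x p \<longrightarrow>
       closest_point (voronoi_vertices (N \<omega>)) (x + t *\<^sub>R v) q \<longrightarrow>
       edge_path (N \<omega>) xs \<longrightarrow> hd xs = p \<longrightarrow> last xs = q \<longrightarrow>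
       real (length xs - 1) \<le> t * M \<longrightarrow>
       (\<forall>y\<in>path_edges_union xs. dist y x \<le> C0 * M * t)"
proof -
  have lfae: "AE \<omega> in P. locfin (N \<omega>)"
  proof (rule AE_I2)
    fix \<omega> assume "\<omega> \<in> space P"
    then show "locfin (N \<omega>)" using assms unfolding poisson_process_def locfin_def by blast
  qed
  have gae: "AE \<omega> in P. \<exists>n0. good (N \<omega>) n0" by (rule AE_good[OF assms])
  have "AE \<omega> in P. \<forall>C>0. \<forall>M>0. \<forall>\<^sub>F t in at_top.
     \<forall>x v p q xs. norm x \<le> C * t \<longrightarrow> norm v = 1 \<longrightarrow>
       closest_point (voronoi_vertices (N \<omega>)) x p \<longrightarrow>
       closest_point (voronoi_vertices (N \<omega>)) (x + t *\<^sub>R v) q \<longrightarrow>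
       edge_path (N \<omega>) xs \<longrightarrow> hd xs = p \<longrightarrow> last xs = q \<longrightarrow>
       real (length xs - 1) \<le> t * M \<longrightarrow>
       (\<forall>y\<in>path_edges_union xs. dist y x \<le> 1600 * M * t)"
    using AE_conjI[OF lfae gae]
  proof (rule eventually_mono)
    fix \<omega> assume "locfin (N \<omega>) \<and> (\<exists>n0. good (N \<omega>) n0)"
    then show "\<forall>C>0. \<forall>M>0. \<forall>\<^sub>F t in at_top.
     \<forall>x v p q xs. norm x \<le> C * t \<longrightarrow> norm v = 1 \<longrightarrow>
       closest_point (voronoi_vertices (N \<omega>)) x p \<longrightarrow>
       closest_point (voronoi_vertices (N \<omega>)) (x + t *\<^sub>R v) q \<longrightarrow>
       edge_path (N \<omega>) xs \<longrightarrow> hd xs = p \<longrightarrow> last xs = q \<longrightarrow>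
       real (length xs - 1) \<le> t * M \<longrightarrow>
       (\<forall>y\<in>path_edges_union xs. dist y x \<le> 1600 * M * t)"
      using main_det by blast
  qed
  then show ?thesis by (intro exI[of _ 1600])
qed

end
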